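(* Let $\mathcal C$ have a right duality, let $(A,m,\eta,\Delta,\epsilon)$ be a Frobenius algebra in $\mathcal C$ with an $A$-swap $(\tilde c_X)_X$, and assume $A$ is swap-commutative. Then the morphism $\Phi:=(\epsilon\otimes\mathrm{id}_{A^\vee})\circ(m\otimes\mathrm{id}_{A^\vee})\circ(\mathrm{id}_A\otimes b_A)$ lies in $\mathrm{Hom}_A(A,A^\vee)$, where $A=(A,m)$ and $A^\vee$ is the dual module of $A$, and $\Phi$ is an isomorphism of $A$-modules. Thus $A$ is self-dual as an $A$-module.
   Context: Throughout, $\mathcal C$ is a strict tensor (monoidal) category with tensor unit $I$ which is abelian and whose tensor product of morphisms is $k$-additive in each factor, where $k:=\mathrm{Hom}(I,I)$ is the (commutative) ground ring. An algebra in $\mathcal C$ is a triple $(A,m,\eta)$ with $A$ an object, $m\in\mathrm{Hom}(A\otimes A,A)$, $\eta\in\mathrm{Hom}(I,A)$, such that $m\circ(\mathrm{id}_A\otimes m)=m\circ(m\otimes\mathrm{id}_A)$ and $m\circ(\mathrm{id}_A\otimes\eta)=\mathrm{id}_A=m\circ(\eta\otimes\mathrm{id}_A)$. A coalgebra is a triple $(A,\Delta,\epsilon)$ with $\Delta\in\mathrm{Hom}(A,A\otimes A)$, $\epsilon\in\mathrm{Hom}(A,I)$, $(\Delta\otimes\mathrm{id}_A)\circ\Delta=(\mathrm{id}_A\otimes\Delta)\circ\Delta$ and $(\mathrm{id}_A\otimes\epsilon)\circ\Delta=\mathrm{id}_A=(\epsilon\otimes\mathrm{id}_A)\circ\Delta$.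 A Frobenius algebra is a quintuple $(A,m,\eta,\Delta,\epsilon)$ such that $(A,m,\eta)$ is an algebra, $(A,\Delta,\epsilon)$ a coalgebra, and $(\mathrm{id}_A\otimes m)\circ(\Delta\otimes\mathrm{id}_A)=\Delta\circ m=(m\otimes\mathrm{id}_A)\circ(\mathrm{id}_A\otimes\Delta)$. A (left) $A$-module is a pair $M=(\dot M,\rho_M)$ with $\rho_M\in\mathrm{Hom}(A\otimes\dot M,\dot M)$, $\rho_M\circ(m\otimes\mathrm{id}_{\dot M})=\rho_M\circ(\mathrm{id}_A\otimes\rho_M)$, $\rho_M\circ(\eta\otimes\mathrm{id}_{\dot M})=\mathrm{id}_{\dot M}$; $\mathrm{Hom}_A(M,N):=\{f\in\mathrm{Hom}(\dot M,\dot N)\mid f\circ\rho_M=\rho_N\circ(\mathrm{id}_A\otimes f)\}$. A right duality assigns to each object $X$ an object $X^\vee$ and morphisms $b_X\in\mathrm{Hom}(I,X\otimes X^\vee)$, $d_X\in\mathrm{Hom}(X^\vee\otimes X,I)$ with $(\mathrm{id}_X\otimes d_X)\circ(b_X\otimes\mathrm{id}_X)=\mathrm{id}_X$ and $(d_X\otimes\mathrm{id}_{X^\vee})\circ(\mathrm{id}_{X^\vee}\otimes b_X)=\mathrm{id}_{X^\vee}$. An $A$-swap is a family of isomorphisms $\tilde c_X\in\mathrm{Hom}(X\otimes A,A\otimes X)$, one for each object $X$, such that for all objects $X,Y$: $(m\otimes\mathrm{id}_X)\circ(\mathrm{id}_A\otimes\tilde c_X)\circ(\tilde c_X\otimes\mathrm{id}_A)=\tilde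 c_X\circ(\mathrm{id}_X\otimes m)$, $\tilde c_X\circ(\mathrm{id}_X\otimes\eta)=\eta\otimes\mathrm{id}_X$, $\tilde c_{X\otimes Y}=(\tilde c_X\otimes\mathrm{id}_Y)\circ(\mathrm{id}_X\otimes\tilde c_Y)$, and $\tilde c_Y\circ(f\otimes g)=(g\otimes f)\circ\tilde c_X$ for all $f\in\mathrm{Hom}(X,Y)$, $g\in\mathrm{Hom}(A,A)$. The algebra $A$ is swap-commutative if $m\circ\tilde c_A=m$. Dual module: for a left $A$-module $M$, $M^\vee:=(\dot M^\vee,\rho_M^\wedge)$ with $\rho_M^\wedge:=(d_{\dot M}\otimes\mathrm{id}_{\dot M^\vee})\circ(\mathrm{id}_{\dot M^\vee}\otimes\rho_M\otimes\mathrm{id}_{\dot M^\vee})\circ((\tilde c_{\dot M^\vee})^{-1}\otimes b_{\dot M})\in\mathrm{Hom}(A\otimes\dot M^\vee,\dot M^\vee)$; this is a left $A$-module. *)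

theory Defs
  imports Main
begin

text \<open>A category is given by a set of objects, hom-sets, composition
  (cmp g f = g after f) and identities.\<close>

record ('o, 'm) tcat =
  Ob    :: "'o set"
  Hom   :: "'o \<Rightarrow> 'o \<Rightarrow> 'm set"
  cmp   :: "'m \<Rightarrow> 'm \<Rightarrow> 'm"
  idm   :: "'o \<Rightarrow> 'm"
  tobj  :: "'o \<Rightarrow> 'o \<Rightarrow> 'o"
  tmor  :: "'m \<Rightarrow> 'm \<Rightarrow> 'm"
  unit  :: "'o"
  madd  :: "'m \<Rightarrow> 'm \<Rightarrow> 'm"
  mzero :: "'o \<Rightarrow> 'o \<Rightarrow> 'm"
  mneg  :: "'m \<Rightarrow> 'm"

definition is_category :: "('o, 'm) tcat \<Rightarrow> bool" where
  "is_category C \<longleftrightarrow>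
     (\<forall>X Y. (X \<notin> Ob C \<or> Y \<notin> Ob C) \<longrightarrow> Hom C X Y = {}) \<and>
     (\<forall>X Y X' Y' f. f \<in> Hom C X Y \<longrightarrow> f \<in> Hom C X' Y' \<longrightarrow> X = X' \<and> Y = Y') \<and>
     (\<forall>X \<in> Ob C. idm C X \<in> Hom C X X) \<and>
     (\<forall>X Y Z f g. f \<in> Hom C X Y \<longrightarrow> g \<in> Hom C Y Z \<longrightarrow> cmp C g f \<in> Hom C X Z) \<and>
     (\<forall>W X Y Z f g h. f \<in> Hom C W X \<longrightarrow> g \<in> Hom C X Y \<longrightarrow> h \<in> Hom C Y Z \<longrightarrow>
         cmp C h (cmp C g f) = cmp C (cmp C h g) f) \<and>
     (\<forall>X Y f. f \<in> Hom C X Y \<longrightarrow> cmp C f (idm C X) = f \<and> cmp C (idm C Y) f = f)"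

definition is_strict_monoidal :: "('o, 'm) tcat \<Rightarrow> bool" where
  "is_strict_monoidal C \<longleftrightarrow>
     unit C \<in> Ob C \<and>
     (\<forall>X \<in> Ob C. \<forall>Y \<in> Ob C. tobj C X Y \<in> Ob C) \<and>
     (\<forall>X \<in> Ob C. \<forall>Y \<in> Ob C. \<forall>Z \<in> Ob C. tobj C (tobj C X Y) Z = tobj C X (tobj C Y Z)) \<and>
     (\<forall>X \<in> Ob C. tobj C (unit C) X = X \<and> tobj C X (unit C) = X) \<and>
     (\<forall>X Y X' Y' f g. f \<in> Hom C X Y \<longrightarrow> g \<in> Hom C X' Y' \<longrightarrow>
         tmor C f g \<in> Hom C (tobj C X X') (tobj C Y Y')) \<and>
     (\<forall>X Y X' Y' X'' Y'' f g h. f \<in> Hom C X Y \<longrightarrow> g \<in> Hom C X' Y' \<longrightarrow> h \<in> Hom C X'' Y'' \<longrightarrow>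
         tmor C (tmor C f g) h = tmor C f (tmor C g h)) \<and>
     (\<forall>X Y f. f \<in> Hom C X Y \<longrightarrow>
         tmor C (idm C (unit C)) f = f \<and> tmor C f (idm C (unit C)) = f) \<and>
     (\<forall>X \<in> Ob C. \<forall>Y \<in> Ob C. tmor C (idm C X) (idm C Y) = idm C (tobj C X Y)) \<and>
     (\<forall>X Y Z X' Y' Z' f g f' g'. f \<in> Hom C X Y \<longrightarrow> g \<in> Hom C Y Z \<longrightarrow>
         f' \<in> Hom C X' Y' \<longrightarrow> g' \<in> Hom C Y' Z' \<longrightarrow>
         tmor C (cmp C g f) (cmp C g' f') = cmp C (tmor C g g') (tmor C f f'))"

definition is_preadditive :: "('o, 'm) tcat \<Rightarrow> bool" where
  "is_preadditive C \<longleftrightarrow>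
     (\<forall>X \<in> Ob C. \<forall>Y \<in> Ob C.
        mzero C X Y \<in> Hom C X Y \<and>
        (\<forall>f \<in> Hom C X Y. \<forall>g \<in> Hom C X Y. madd C f g \<in> Hom C X Y) \<and>
        (\<forall>f \<in> Hom C X Y. mneg C f \<in> Hom C X Y) \<and>
        (\<forall>f \<in> Hom C X Y. \<forall>g \<in> Hom C X Y. \<forall>h \<in> Hom C X Y.
            madd C (madd C f g) h = madd C f (madd C g h)) \<and>
        (\<forall>f \<in> Hom C X Y. \<forall>g \<in> Hom C X Y. madd C f g = madd C g f) \<and>
        (\<forall>f \<in> Hom C X Y. madd C f (mzero C X Y) = f) \<and>
        (\<forall>f \<in> Hom C X Y. madd C f (mneg C f) = mzero C X Y)) \<and>
     (\<forall>X Y Z f g g'. f \<in> Hom C X Y \<longrightarrow> g \<in> Hom C Y Z \<longrightarrow> g' \<in> Hom C Y Z \<longrightarrow>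
         cmp C (madd C g g') f = madd C (cmp C g f) (cmp C g' f)) \<and>
     (\<forall>X Y Z f f' g. f \<in> Hom C X Y \<longrightarrow> f' \<in> Hom C X Y \<longrightarrow> g \<in> Hom C Y Z \<longrightarrow>
         cmp C g (madd C f f') = madd C (cmp C g f) (cmp C g f'))"

definition tensor_additive :: "('o, 'm) tcat \<Rightarrow> bool" where
  "tensor_additive C \<longleftrightarrow>
     (\<forall>X Y X' Y' f f' h. f \<in> Hom C X Y \<longrightarrow> f' \<in> Hom C X Y \<longrightarrow> h \<in> Hom C X' Y' \<longrightarrow>
         tmor C (madd C f f') h = madd C (tmor C f h) (tmor C f' h) \<and>
         tmor C h (madd C f f') = madd C (tmor C h f) (tmor C h f'))"

definition is_kernel :: "('o, 'm) tcat \<Rightarrow> 'o \<Rightarrow> 'o \<Rightarrow> 'm \<Rightarrow> 'o \<Rightarrow> 'm \<Rightarrow> bool" where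
  "is_kernel C X Y f K k \<longleftrightarrow>
     f \<in> Hom C X Y \<and> k \<in> Hom C K X \<and> cmp C f k = mzero C K Y \<and>
     (\<forall>W g. g \<in> Hom C W X \<longrightarrow> cmp C f g = mzero C W Y \<longrightarrow>
         (\<exists>!u. u \<in> Hom C W K \<and> cmp C k u = g))"

definition is_cokernel :: "('o, 'm) tcat \<Rightarrow> 'o \<Rightarrow> 'o \<Rightarrow> 'm \<Rightarrow> 'o \<Rightarrow> 'm \<Rightarrow> bool" where
  "is_cokernel C X Y f Q q \<longleftrightarrow>
     f \<in> Hom C X Y \<and> q \<in> Hom C Y Q \<and> cmp C q f = mzero C X Q \<and>
     (\<forall>W g. g \<in> Hom C Y W \<longrightarrow> cmp C g f = mzero C X W \<longrightarrow>
         (\<exists>!u. u \<in> Hom C Q W \<and> cmp C u q = g))"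

definition is_mono :: "('o, 'm) tcat \<Rightarrow> 'o \<Rightarrow> 'o \<Rightarrow> 'm \<Rightarrow> bool" where
  "is_mono C X Y f \<longleftrightarrow> f \<in> Hom C X Y \<and>
     (\<forall>W g h. g \<in> Hom C W X \<longrightarrow> h \<in> Hom C W X \<longrightarrow> cmp C f g = cmp C f h \<longrightarrow> g = h)"

definition is_epi :: "('o, 'm) tcat \<Rightarrow> 'o \<Rightarrow> 'o \<Rightarrow> 'm \<Rightarrow> bool" where
  "is_epi C X Y f \<longleftrightarrow> f \<in> Hom C X Y \<and>
     (\<forall>W g h. g \<in> Hom C Y W \<longrightarrow> h \<in> Hom C Y W \<longrightarrow> cmp C g f = cmp C h f \<longrightarrow> g = h)"

definition is_abelian :: "('o, 'm) tcat \<Rightarrow> bool" where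
  "is_abelian C \<longleftrightarrow>
     is_preadditive C \<and>
     (\<exists>Z \<in> Ob C. idm C Z = mzero C Z Z) \<and>
     (\<forall>X \<in> Ob C. \<forall>Y \<in> Ob C. \<exists>P i1 i2 p1 p2. P \<in> Ob C \<and>
        i1 \<in> Hom C X P \<and> i2 \<in> Hom C Y P \<and> p1 \<in> Hom C P X \<and> p2 \<in> Hom C P Y \<and>
        cmp C p1 i1 = idm C X \<and> cmp C p2 i2 = idm C Y \<and>
        madd C (cmp C i1 p1) (cmp C i2 p2) = idm C P) \<and>
     (\<forall>X Y f. f \<in> Hom C X Y \<longrightarrow>
        (\<exists>K k. is_kernel C X Y f K k) \<and> (\<exists>Q q. is_cokernel C X Y f Q q)) \<and>
     (\<forall>X Y f. is_mono C X Y f \<longrightarrow> (\<exists>Z g. is_kernel C Y Z g X f)) \<and>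
     (\<forall>X Y f. is_epi C X Y f \<longrightarrow> (\<exists>W g. is_cokernel C W X g Y f))"

definition strict_abelian_tensor_cat :: "('o, 'm) tcat \<Rightarrow> bool" where
  "strict_abelian_tensor_cat C \<longleftrightarrow>
     is_category C \<and> is_strict_monoidal C \<and> is_abelian C \<and> tensor_additive C"

definition iso_mor :: "('o, 'm) tcat \<Rightarrow> 'o \<Rightarrow> 'o \<Rightarrow> 'm \<Rightarrow> bool" where
  "iso_mor C X Y f \<longleftrightarrow> f \<in> Hom C X Y \<and>
     (\<exists>g \<in> Hom C Y X. cmp C g f = idm C X \<and> cmp C f g = idm C Y)"

definition inv_mor :: "('o, 'm) tcat \<Rightarrow> 'o \<Rightarrow> 'o \<Rightarrow> 'm \<Rightarrow> 'm" where
  "inv_mor C X Y f = (SOME g. g \<in> Hom C Y X \<and> cmp C g f = idm C X \<and> cmp C f g = idm C Y)"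

definition right_duality ::
  "('o, 'm) tcat \<Rightarrow> ('o \<Rightarrow> 'o) \<Rightarrow> ('o \<Rightarrow> 'm) \<Rightarrow> ('o \<Rightarrow> 'm) \<Rightarrow> bool" where
  "right_duality C dl b d \<longleftrightarrow>
     (\<forall>X \<in> Ob C. dl X \<in> Ob C \<and>
        b X \<in> Hom C (unit C) (tobj C X (dl X)) \<and>
        d X \<in> Hom C (tobj C (dl X) X) (unit C) \<and>
        cmp C (tmor C (idm C X) (d X)) (tmor C (b X) (idm C X)) = idm C X \<and>
        cmp C (tmor C (d X) (idm C (dl X))) (tmor C (idm C (dl X)) (b X)) = idm C (dl X))"

definition is_algebra :: "('o, 'm) tcat \<Rightarrow> 'o \<Rightarrow> 'm \<Rightarrow> 'm \<Rightarrow> bool" where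
  "is_algebra C A m \<eta> \<longleftrightarrow>
     A \<in> Ob C \<and> m \<in> Hom C (tobj C A A) A \<and> \<eta> \<in> Hom C (unit C) A \<and>
     cmp C m (tmor C (idm C A) m) = cmp C m (tmor C m (idm C A)) \<and>
     cmp C m (tmor C (idm C A) \<eta>) = idm C A \<and>
     cmp C m (tmor C \<eta> (idm C A)) = idm C A"

definition is_coalgebra :: "('o, 'm) tcat \<Rightarrow> 'o \<Rightarrow> 'm \<Rightarrow> 'm \<Rightarrow> bool" where
  "is_coalgebra C A \<Delta> \<epsilon> \<longleftrightarrow>
     A \<in> Ob C \<and> \<Delta> \<in> Hom C A (tobj C A A) \<and> \<epsilon> \<in> Hom C A (unit C) \<and>
     cmp C (tmor C \<Delta> (idm C A)) \<Delta> = cmp C (tmor C (idm C A) \<Delta>) \<Delta> \<and>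
     cmp C (tmor C (idm C A) \<epsilon>) \<Delta> = idm C A \<and>
     cmp C (tmor C \<epsilon> (idm C A)) \<Delta> = idm C A"

definition is_frobenius :: "('o, 'm) tcat \<Rightarrow> 'o \<Rightarrow> 'm \<Rightarrow> 'm \<Rightarrow> 'm \<Rightarrow> 'm \<Rightarrow> bool" where
  "is_frobenius C A m \<eta> \<Delta> \<epsilon> \<longleftrightarrow>
     is_algebra C A m \<eta> \<and> is_coalgebra C A \<Delta> \<epsilon> \<and>
     cmp C (tmor C (idm C A) m) (tmor C \<Delta> (idm C A)) = cmp C \<Delta> m \<and>
     cmp C \<Delta> m = cmp C (tmor C m (idm C A)) (tmor C (idm C A) \<Delta>)"

definition is_A_swap :: "('o, 'm) tcat \<Rightarrow> 'o \<Rightarrow> 'm \<Rightarrow> 'm \<Rightarrow> ('o \<Rightarrow> 'm) \<Rightarrow> bool" where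
  "is_A_swap C A m \<eta> cs \<longleftrightarrow>
     (\<forall>X \<in> Ob C. iso_mor C (tobj C X A) (tobj C A X) (cs X) \<and>
        cmp C (tmor C m (idm C X)) (cmp C (tmor C (idm C A) (cs X)) (tmor C (cs X) (idm C A)))
          = cmp C (cs X) (tmor C (idm C X) m) \<and>
        cmp C (cs X) (tmor C (idm C X) \<eta>) = tmor C \<eta> (idm C X)) \<and>
     (\<forall>X \<in> Ob C. \<forall>Y \<in> Ob C.
        cs (tobj C X Y) = cmp C (tmor C (cs X) (idm C Y)) (tmor C (idm C X) (cs Y))) \<and>
     (\<forall>X Y f g. f \<in> Hom C X Y \<longrightarrow> g \<in> Hom C A A \<longrightarrow>
        cmp C (cs Y) (tmor C f g) = cmp C (tmor C g f) (cs X))"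

definition is_module :: "('o, 'm) tcat \<Rightarrow> 'o \<Rightarrow> 'm \<Rightarrow> 'm \<Rightarrow> 'o \<Rightarrow> 'm \<Rightarrow> bool" where
  "is_module C A m \<eta> M \<rho> \<longleftrightarrow>
     M \<in> Ob C \<and> \<rho> \<in> Hom C (tobj C A M) M \<and>
     cmp C \<rho> (tmor C m (idm C M)) = cmp C \<rho> (tmor C (idm C A) \<rho>) \<and>
     cmp C \<rho> (tmor C \<eta> (idm C M)) = idm C M"

definition homA :: "('o, 'm) tcat \<Rightarrow> 'o \<Rightarrow> 'o \<Rightarrow> 'm \<Rightarrow> 'o \<Rightarrow> 'm \<Rightarrow> 'm set" where
  "homA C A M \<rho>M N \<rho>N =
     {f \<in> Hom C M N. cmp C f \<rho>M = cmp C \<rho>N (tmor C (idm C A) f)}"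

definition dual_action ::
  "('o, 'm) tcat \<Rightarrow> 'o \<Rightarrow> ('o \<Rightarrow> 'm) \<Rightarrow> ('o \<Rightarrow> 'o) \<Rightarrow> ('o \<Rightarrow> 'm) \<Rightarrow> ('o \<Rightarrow> 'm)
     \<Rightarrow> 'o \<Rightarrow> 'm \<Rightarrow> 'm" where
  "dual_action C A cs dl b d M \<rho> =
     cmp C (tmor C (d M) (idm C (dl M)))
       (cmp C (tmor C (tmor C (idm C (dl M)) \<rho>) (idm C (dl M)))
          (tmor C (inv_mor C (tobj C (dl M) A) (tobj C A (dl M)) (cs (dl M))) (b M)))"

definition frob_Phi ::
  "('o, 'm) tcat \<Rightarrow> 'o \<Rightarrow> 'm \<Rightarrow> 'm \<Rightarrow> ('o \<Rightarrow> 'o) \<Rightarrow> ('o \<Rightarrow> 'm) \<Rightarrow> 'm" where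
  "frob_Phi C A m \<epsilon> dl b =
     cmp C (tmor C \<epsilon> (idm C (dl A)))
       (cmp C (tmor C m (idm C (dl A))) (tmor C (idm C A) (b A)))"

end

theory Submission imports Defs begin

locale fr =
  fixes C :: "('o, 'm) tcat"
    and dl :: "'o \<Rightarrow> 'o" and b d :: "'o \<Rightarrow> 'm"
    and A :: 'o and m \<eta> \<Delta> \<epsilon> :: 'm and cs :: "'o \<Rightarrow> 'm"
  assumes cat: "strict_abelian_tensor_cat C"
    and dua: "right_duality C dl b d"
    and frob: "is_frobenius C A m \<eta> \<Delta> \<epsilon>"
    and sw: "is_A_swap C A m \<eta> cs"
    and sc: "cmp C m (cs A) = m"
begin

abbreviation cp (infixr "\<cdot>" 55) where "g \<cdot> f \<equiv> cmp C g f"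
abbreviation tm (infixr "\<otimes>" 60) where "f \<otimes> g \<equiv> tmor C f g"
abbreviation to (infixr "\<odot>" 65) where "X \<odot> Y \<equiv> tobj C X Y"
abbreviation ii where "ii X \<equiv> idm C X"
abbreviation "D \<equiv> dl A"
abbreviation "I \<equiv> unit C"
abbreviation "ci \<equiv> inv_mor C (D \<odot> A) (A \<odot> D) (cs D)"
abbreviation "ca \<equiv> inv_mor C (A \<odot> A) (A \<odot> A) (cs A)"

lemma isc: "is_category C" using cat unfolding strict_abelian_tensor_cat_def by blast
lemma ism: "is_strict_monoidal C" using cat unfolding strict_abelian_tensor_cat_def by blast

lemma obA[simp]: "A \<in> Ob C" using frob unfolding is_frobenius_def is_algebra_def by blast
lemma obD[simp]: "D \<in> Ob C" using dua unfolding right_duality_def by simp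
lemma obI[simp]: "I \<in> Ob C" using ism unfolding is_strict_monoidal_def by blast
lemma obT[simp]: "X \<in> Ob C \<Longrightarrow> Y \<in> Ob C \<Longrightarrow> X \<odot> Y \<in> Ob C" using ism unfolding is_strict_monoidal_def by auto
lemma oassoc[simp]: "X \<in> Ob C \<Longrightarrow> Y \<in> Ob C \<Longrightarrow> Z \<in> Ob C \<Longrightarrow> (X \<odot> Y) \<odot> Z = X \<odot> (Y \<odot> Z)"
  using ism unfolding is_strict_monoidal_def by auto
lemma ounitl[simp]: "X \<in> Ob C \<Longrightarrow> I \<odot> X = X" using ism unfolding is_strict_monoidal_def by auto
lemma ounitr[simp]: "X \<in> Ob C \<Longrightarrow> X \<odot> I = X" using ism unfolding is_strict_monoidal_def by auto

definition wt where "wt f \<longleftrightarrow> (\<exists>X Y. f \<in> Hom C X Y)"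
definition sdom where "sdom f = (THE X. \<exists>Y. f \<in> Hom C X Y)"
definition scod where "scod f = (THE Y. \<exists>X. f \<in> Hom C X Y)"

lemma hom_uniq: "f \<in> Hom C X Y \<Longrightarrow> f \<in> Hom C X' Y' \<Longrightarrow> X = X' \<and> Y = Y'"
  using isc unfolding is_category_def by meson
lemma hom_ob: "f \<in> Hom C X Y \<Longrightarrow> X \<in> Ob C \<and> Y \<in> Ob C"
  using isc unfolding is_category_def by (metis empty_iff)

lemma homD: assumes "f \<in> Hom C X Y" shows "wt f" "sdom f = X" "scod f = Y"
proof -
  show "wt f" using assms unfolding wt_def by blast
  show "sdom f = X" unfolding sdom_def using assms hom_uniq by (intro the_equality) blast+
  show "scod f = Y" unfolding scod_def using assms hom_uniq by (intro the_equality) blast+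
qed

lemma wt_hom: "wt f \<Longrightarrow> f \<in> Hom C (sdom f) (scod f)"
  unfolding wt_def using homD by blast

lemma wt_ob[simp]: "wt f \<Longrightarrow> sdom f \<in> Ob C" "wt f \<Longrightarrow> scod f \<in> Ob C"
  using wt_hom hom_ob by blast+

lemma hom_iff: "f \<in> Hom C X Y \<longleftrightarrow> wt f \<and> sdom f = X \<and> scod f = Y"
  using homD wt_hom by blast

lemma cmp_ty: "f \<in> Hom C X Y \<Longrightarrow> g \<in> Hom C Y Z \<Longrightarrow> cmp C g f \<in> Hom C X Z"
  using isc unfolding is_category_def by blast
lemma tm_ty: "f \<in> Hom C X Y \<Longrightarrow> g \<in> Hom C X' Y' \<Longrightarrow> f \<otimes> g \<in> Hom C (X \<odot> X') (Y \<odot> Y')"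
  using ism unfolding is_strict_monoidal_def by meson
lemma id_ty: "X \<in> Ob C \<Longrightarrow> ii X \<in> Hom C X X"
  using isc unfolding is_category_def by blast

lemma wt_cmp[simp]: "wt f \<Longrightarrow> wt g \<Longrightarrow> scod f = sdom g \<Longrightarrow> wt (g \<cdot> f)"
  and sdom_cmp[simp]: "wt f \<Longrightarrow> wt g \<Longrightarrow> scod f = sdom g \<Longrightarrow> sdom (g \<cdot> f) = sdom f"
  and scod_cmp[simp]: "wt f \<Longrightarrow> wt g \<Longrightarrow> scod f = sdom g \<Longrightarrow> scod (g \<cdot> f) = scod g"
  using cmp_ty[of f "sdom f" "scod f" g "scod g"] wt_hom homD by metis+

lemma wt_tm[simp]: "wt f \<Longrightarrow> wt g \<Longrightarrow> wt (f \<otimes> g)"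
  and sdom_tm[simp]: "wt f \<Longrightarrow> wt g \<Longrightarrow> sdom (f \<otimes> g) = sdom f \<odot> sdom g"
  and scod_tm[simp]: "wt f \<Longrightarrow> wt g \<Longrightarrow> scod (f \<otimes> g) = scod f \<odot> scod g"
  using tm_ty[of f "sdom f" "scod f" g "sdom g" "scod g"] wt_hom homD by metis+

lemma wt_id[simp]: "X \<in> Ob C \<Longrightarrow> wt (ii X)"
  and sdom_id[simp]: "X \<in> Ob C \<Longrightarrow> sdom (ii X) = X"
  and scod_id[simp]: "X \<in> Ob C \<Longrightarrow> scod (ii X) = X"
  using id_ty homD by metis+

lemma m_hom: "m \<in> Hom C (A \<odot> A) A" using frob unfolding is_frobenius_def is_algebra_def by blast
lemma eta_hom: "\<eta> \<in> Hom C I A" using frob unfolding is_frobenius_def is_algebra_def by blast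
lemma Delta_hom: "\<Delta> \<in> Hom C A (A \<odot> A)" using frob unfolding is_frobenius_def is_coalgebra_def by blast
lemma eps_hom: "\<epsilon> \<in> Hom C A I" using frob unfolding is_frobenius_def is_coalgebra_def by blast
lemma b_hom: "b A \<in> Hom C I (A \<odot> D)" using dua obA unfolding right_duality_def by blast
lemma d_hom: "d A \<in> Hom C (D \<odot> A) I" using dua obA unfolding right_duality_def by blast

lemma iso_cs: "X \<in> Ob C \<Longrightarrow> iso_mor C (X \<odot> A) (A \<odot> X) (cs X)"
  using sw unfolding is_A_swap_def by blast

lemma inv_props: assumes "X \<in> Ob C"
  shows "inv_mor C (X \<odot> A) (A \<odot> X) (cs X) \<in> Hom C (A \<odot> X) (X \<odot> A)"
    "inv_mor C (X \<odot> A) (A \<odot> X) (cs X) \<cdot> cs X = ii (X \<odot> A)"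
    "cs X \<cdot> inv_mor C (X \<odot> A) (A \<odot> X) (cs X) = ii (A \<odot> X)"
    "cs X \<in> Hom C (X \<odot> A) (A \<odot> X)"
proof -
  have "iso_mor C (X \<odot> A) (A \<odot> X) (cs X)" using iso_cs assms .
  then have h: "cs X \<in> Hom C (X \<odot> A) (A \<odot> X)" and
    "\<exists>g. g \<in> Hom C (A \<odot> X) (X \<odot> A) \<and> g \<cdot> cs X = ii (X \<odot> A) \<and> cs X \<cdot> g = ii (A \<odot> X)"
    unfolding iso_mor_def by blast+
  from someI_ex[OF this(2)] show
    "inv_mor C (X \<odot> A) (A \<odot> X) (cs X) \<in> Hom C (A \<odot> X) (X \<odot> A)"
    "inv_mor C (X \<odot> A) (A \<odot> X) (cs X) \<cdot> cs X = ii (X \<odot> A)"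
    "cs X \<cdot> inv_mor C (X \<odot> A) (A \<odot> X) (cs X) = ii (A \<odot> X)"
    unfolding inv_mor_def by blast+
  show "cs X \<in> Hom C (X \<odot> A) (A \<odot> X)" by (fact h)
qed

lemmas base_hom = m_hom eta_hom Delta_hom eps_hom b_hom d_hom
  inv_props(1)[OF obA] inv_props(4)[OF obA] inv_props(1)[OF obD] inv_props(4)[OF obD]

lemma base_wt[simp]: "wt m" "wt \<eta>" "wt \<Delta>" "wt \<epsilon>" "wt (b A)" "wt (d A)" "wt ci" "wt ca" "wt (cs A)" "wt (cs D)"
  using base_hom homD by blast+
lemma base_sdom[simp]: "sdom m = A \<odot> A" "sdom \<eta> = I" "sdom \<Delta> = A" "sdom \<epsilon> = A" "sdom (b A) = I" "sdom (d A) = D \<odot> A"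
   "sdom ci = A \<odot> D" "sdom ca = A \<odot> A" "sdom (cs A) = A \<odot> A" "sdom (cs D) = D \<odot> A"
  using base_hom homD by blast+
lemma base_scod[simp]: "scod m = A" "scod \<eta> = A" "scod \<Delta> = A \<odot> A" "scod \<epsilon> = I" "scod (b A) = A \<odot> D" "scod (d A) = I"
   "scod ci = D \<odot> A" "scod ca = A \<odot> A" "scod (cs A) = A \<odot> A" "scod (cs D) = A \<odot> D"
  using base_hom homD by blast+

lemma assoc[simp]: "wt f \<Longrightarrow> wt g \<Longrightarrow> wt h \<Longrightarrow> scod f = sdom g \<Longrightarrow> scod g = sdom h \<Longrightarrow> (h \<cdot> g) \<cdot> f = h \<cdot> (g \<cdot> f)"
  using isc wt_hom unfolding is_category_def by metis
lemma idl[simp]: "wt f \<Longrightarrow> scod f = Y \<Longrightarrow> ii Y \<cdot> f = f"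
  using isc wt_hom unfolding is_category_def by metis
lemma idr[simp]: "wt f \<Longrightarrow> sdom f = X \<Longrightarrow> f \<cdot> ii X = f"
  using isc wt_hom unfolding is_category_def by metis

lemma tassoc[simp]: "wt f \<Longrightarrow> wt g \<Longrightarrow> wt h \<Longrightarrow> (f \<otimes> g) \<otimes> h = f \<otimes> (g \<otimes> h)"
  using ism wt_hom unfolding is_strict_monoidal_def by metis
lemma tunitl[simp]: "wt f \<Longrightarrow> ii I \<otimes> f = f" and tunitr[simp]: "wt f \<Longrightarrow> f \<otimes> ii I = f"
  using ism wt_hom unfolding is_strict_monoidal_def by metis+
lemma tid: "X \<in> Ob C \<Longrightarrow> Y \<in> Ob C \<Longrightarrow> ii X \<otimes> ii Y = ii (X \<odot> Y)"
  using ism unfolding is_strict_monoidal_def by metis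
lemma inter: "wt f \<Longrightarrow> wt g \<Longrightarrow> wt f' \<Longrightarrow> wt g' \<Longrightarrow> scod f = sdom g \<Longrightarrow> scod f' = sdom g' \<Longrightarrow>
   (g \<otimes> g') \<cdot> (f \<otimes> f') = (g \<cdot> f) \<otimes> (g' \<cdot> f')"
  using ism wt_hom unfolding is_strict_monoidal_def by metis

lemma tid2[simp]: "X \<in> Ob C \<Longrightarrow> Y \<in> Ob C \<Longrightarrow> ii X \<otimes> ii Y = ii (X \<odot> Y)"
  by (rule tid)
lemma tid3[simp]: "X \<in> Ob C \<Longrightarrow> Y \<in> Ob C \<Longrightarrow> wt f \<Longrightarrow> ii X \<otimes> (ii Y \<otimes> f) = ii (X \<odot> Y) \<otimes> f"
  by (subst tassoc[symmetric]) (simp_all add: tid)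

lemma chainL: "g \<cdot> f = h \<Longrightarrow> wt f \<Longrightarrow> wt g \<Longrightarrow> wt k \<Longrightarrow> scod k = sdom f \<Longrightarrow> scod f = sdom g \<Longrightarrow> g \<cdot> (f \<cdot> k) = h \<cdot> k"
  by (subst assoc[symmetric]) simp_all

lemma snake1: "(ii A \<otimes> d A) \<cdot> (b A \<otimes> ii A) = ii A"
  using dua unfolding right_duality_def by simp
lemma snake2: "(d A \<otimes> ii D) \<cdot> (ii D \<otimes> b A) = ii D"
  using dua unfolding right_duality_def by simp

lemma GD1: assumes X: "X \<in> Ob C" and p: "wt p" "sdom p = X \<odot> A" "scod p = I"
  shows "d A \<cdot> (((p \<otimes> ii D) \<cdot> (ii X \<otimes> b A)) \<otimes> ii A) = p"
proof -
  have e1: "((p \<otimes> ii D) \<cdot> (ii X \<otimes> b A)) \<otimes> (ii A \<cdot> ii A) = ((p \<otimes> ii D) \<otimes> ii A) \<cdot> ((ii X \<otimes> b A) \<otimes> ii A)"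
    by (rule inter[symmetric]) (simp_all add: X p)
  have e2: "(ii I \<otimes> d A) \<cdot> (p \<otimes> (ii D \<otimes> ii A)) = (ii I \<cdot> p) \<otimes> (d A \<cdot> (ii D \<otimes> ii A))"
    by (rule inter) (simp_all add: X p)
  have e3: "(p \<otimes> ii I) \<cdot> ((ii X \<otimes> ii A) \<otimes> d A) = (p \<cdot> (ii X \<otimes> ii A)) \<otimes> (ii I \<cdot> d A)"
    by (rule inter) (simp_all add: X p)
  have e4: "(ii X \<otimes> (ii A \<otimes> d A)) \<cdot> (ii X \<otimes> (b A \<otimes> ii A)) = (ii X \<cdot> ii X) \<otimes> ((ii A \<otimes> d A) \<cdot> (b A \<otimes> ii A))"
    by (rule inter) (simp_all add: X p)
  have "d A \<cdot> (((p \<otimes> ii D) \<cdot> (ii X \<otimes> b A)) \<otimes> ii A) = d A \<cdot> (p \<otimes> ii (D \<odot> A)) \<cdot> (ii X \<otimes> b A \<otimes> ii A)"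
    using e1 by (simp add: X p)
  also have "\<dots> = (p \<otimes> d A) \<cdot> (ii X \<otimes> b A \<otimes> ii A)"
    using e2 by (simp add: X p chainL)
  also have "\<dots> = p \<cdot> (ii (X \<odot> A) \<otimes> d A) \<cdot> (ii X \<otimes> b A \<otimes> ii A)"
  proof -
    have e3': "p \<cdot> (ii (X \<odot> A) \<otimes> d A) = p \<otimes> d A" using e3 by (simp add: X p)
    show ?thesis by (simp add: X p chainL[OF e3', symmetric])
  qed
  also have "\<dots> = p"
    using e4 by (simp add: X p snake1)
  finally show ?thesis .
qed

lemma GD2: assumes h: "wt h" "sdom h = D" "scod h = D" and hd: "d A \<cdot> (h \<otimes> ii A) = d A"
  shows "h = ii D"
proof -
  have f1: "(ii D \<otimes> b A) \<cdot> (h \<otimes> ii I) = (ii D \<cdot> h) \<otimes> (b A \<cdot> ii I)"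
    by (rule inter) (simp_all add: h)
  have f2: "(h \<otimes> ii (A \<odot> D)) \<cdot> (ii D \<otimes> b A) = (h \<cdot> ii D) \<otimes> (ii (A \<odot> D) \<cdot> b A)"
    by (rule inter) (simp_all add: h)
  have f3: "(d A \<otimes> ii D) \<cdot> ((h \<otimes> ii A) \<otimes> ii D) = (d A \<cdot> (h \<otimes> ii A)) \<otimes> (ii D \<cdot> ii D)"
    by (rule inter) (simp_all add: h)
  have f3': "(d A \<otimes> ii D) \<cdot> (h \<otimes> ii (A \<odot> D)) = d A \<otimes> ii D" using f3 by (simp add: h hd)
  have "h = ii D \<cdot> h" by (simp add: h)
  also have "\<dots> = ((d A \<otimes> ii D) \<cdot> (ii D \<otimes> b A)) \<cdot> h" by (simp only: snake2)
  also have "\<dots> = (d A \<otimes> ii D) \<cdot> (h \<otimes> b A)" using f1 by (simp add: h)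
  also have "\<dots> = (d A \<otimes> ii D) \<cdot> (h \<otimes> ii (A \<odot> D)) \<cdot> (ii D \<otimes> b A)" using f2 by (simp add: h)
  also have "\<dots> = (d A \<otimes> ii D) \<cdot> (ii D \<otimes> b A)" by (simp add: h chainL[OF f3'])
  also have "\<dots> = ii D" by (rule snake2)
  finally show ?thesis .
qed

lemma massoc: "m \<cdot> (ii A \<otimes> m) = m \<cdot> (m \<otimes> ii A)"
  using frob unfolding is_frobenius_def is_algebra_def by blast
lemma munit1: "m \<cdot> (ii A \<otimes> \<eta>) = ii A" and munit2: "m \<cdot> (\<eta> \<otimes> ii A) = ii A"
  using frob unfolding is_frobenius_def is_algebra_def by blast+
lemma counit1: "(ii A \<otimes> \<epsilon>) \<cdot> \<Delta> = ii A" and counit2: "(\<epsilon> \<otimes> ii A) \<cdot> \<Delta> = ii A"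
  using frob unfolding is_frobenius_def is_coalgebra_def by blast+
lemma frob1: "(ii A \<otimes> m) \<cdot> (\<Delta> \<otimes> ii A) = \<Delta> \<cdot> m" and frob2: "(m \<otimes> ii A) \<cdot> (ii A \<otimes> \<Delta>) = \<Delta> \<cdot> m"
  using frob unfolding is_frobenius_def by metis+
lemma natur: "f \<in> Hom C X Y \<Longrightarrow> cs Y \<cdot> (f \<otimes> ii A) = (ii A \<otimes> f) \<cdot> cs X"
  using sw id_ty[OF obA] unfolding is_A_swap_def by blast
lemma ci1: "ci \<cdot> cs D = ii (D \<odot> A)" and ci2: "cs D \<cdot> ci = ii (A \<odot> D)"
  and ca1: "ca \<cdot> cs A = ii (A \<odot> A)" and ca2: "cs A \<cdot> ca = ii (A \<odot> A)"
  using inv_props[OF obD] inv_props[OF obA] by blast+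

definition pp where "pp = \<epsilon> \<cdot> m"
lemma pp_ty[simp]: "wt pp" "sdom pp = A \<odot> A" "scod pp = I" unfolding pp_def by simp_all

definition Phi where "Phi = (pp \<otimes> ii D) \<cdot> (ii A \<otimes> b A)"
lemma Phi_ty[simp]: "wt Phi" "sdom Phi = A" "scod Phi = D" unfolding Phi_def by simp_all

definition dh where "dh = \<Delta> \<cdot> \<eta>"
lemma dh_ty[simp]: "wt dh" "sdom dh = I" "scod dh = A \<odot> A" unfolding dh_def by simp_all

definition Psi where "Psi = (d A \<otimes> ii A) \<cdot> (ii D \<otimes> dh)"
lemma Psi_ty[simp]: "wt Psi" "sdom Psi = D" "scod Psi = A" unfolding Psi_def by simp_all

lemma L1: "d A \<cdot> (Phi \<otimes> ii A) = pp"
  unfolding Phi_def by (rule GD1) simp_all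

lemma pp_split: "pp \<otimes> ii A = (\<epsilon> \<otimes> ii A) \<cdot> (m \<otimes> ii A)"
  unfolding pp_def by (subst inter) simp_all

lemma PsiPhi: "Psi \<cdot> Phi = ii A"
proof -
  have g1: "(ii D \<otimes> dh) \<cdot> (Phi \<otimes> ii I) = (ii D \<cdot> Phi) \<otimes> (dh \<cdot> ii I)"
    by (rule inter) simp_all
  have g2: "(Phi \<otimes> ii (A \<odot> A)) \<cdot> (ii A \<otimes> dh) = (Phi \<cdot> ii A) \<otimes> (ii (A \<odot> A) \<cdot> dh)"
    by (rule inter) simp_all
  have g3: "(d A \<otimes> ii A) \<cdot> ((Phi \<otimes> ii A) \<otimes> ii A) = (d A \<cdot> (Phi \<otimes> ii A)) \<otimes> (ii A \<cdot> ii A)"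
    by (rule inter) simp_all
  have g3': "(d A \<otimes> ii A) \<cdot> (Phi \<otimes> ii (A \<odot> A)) = pp \<otimes> ii A" using g3 by (simp add: L1)
  have g5: "ii A \<otimes> dh = (ii A \<otimes> \<Delta>) \<cdot> (ii A \<otimes> \<eta>)"
    unfolding dh_def by (subst inter) simp_all
  have "Psi \<cdot> Phi = (d A \<otimes> ii A) \<cdot> (ii D \<otimes> dh) \<cdot> Phi" unfolding Psi_def by simp
  also have "\<dots> = (d A \<otimes> ii A) \<cdot> (Phi \<otimes> dh)" using g1 by simp
  also have "\<dots> = (d A \<otimes> ii A) \<cdot> (Phi \<otimes> ii (A \<odot> A)) \<cdot> (ii A \<otimes> dh)" using g2 by simp
  also have "\<dots> = (pp \<otimes> ii A) \<cdot> (ii A \<otimes> dh)" by (simp add: chainL[OF g3'])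
  also have "\<dots> = (\<epsilon> \<otimes> ii A) \<cdot> ((m \<otimes> ii A) \<cdot> (ii A \<otimes> \<Delta>)) \<cdot> (ii A \<otimes> \<eta>)"
    by (simp add: pp_split g5)
  also have "\<dots> = ((\<epsilon> \<otimes> ii A) \<cdot> \<Delta>) \<cdot> m \<cdot> (ii A \<otimes> \<eta>)" by (simp add: frob2)
  also have "\<dots> = ii A" by (simp add: counit2 munit1)
  finally show ?thesis .
qed

lemma PhiPsi: "Phi \<cdot> Psi = ii D"
proof (rule GD2)
  show "wt (Phi \<cdot> Psi)" "sdom (Phi \<cdot> Psi) = D" "scod (Phi \<cdot> Psi) = D" by simp_all
  have k0: "(Phi \<cdot> Psi) \<otimes> (ii A \<cdot> ii A) = (Phi \<otimes> ii A) \<cdot> (Psi \<otimes> ii A)"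
    by (rule inter[symmetric]) simp_all
  have k0b: "((d A \<otimes> ii A) \<cdot> (ii D \<otimes> dh)) \<otimes> (ii A \<cdot> ii A) = ((d A \<otimes> ii A) \<otimes> ii A) \<cdot> ((ii D \<otimes> dh) \<otimes> ii A)"
    by (rule inter[symmetric]) simp_all
  have k1: "(ii I \<otimes> pp) \<cdot> (d A \<otimes> ii (A \<odot> A)) = (ii I \<cdot> d A) \<otimes> (pp \<cdot> ii (A \<odot> A))"
    by (rule inter) simp_all
  have k2: "(d A \<otimes> ii I) \<cdot> (ii (D \<odot> A) \<otimes> pp) = (d A \<cdot> ii (D \<odot> A)) \<otimes> (ii I \<cdot> pp)"
    by (rule inter) simp_all
  have k2': "d A \<cdot> (ii (D \<odot> A) \<otimes> pp) = d A \<otimes> pp" using k2 by simp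
  have k3: "(ii D \<otimes> (ii A \<otimes> pp)) \<cdot> (ii D \<otimes> (dh \<otimes> ii A)) = (ii D \<cdot> ii D) \<otimes> ((ii A \<otimes> pp) \<cdot> (dh \<otimes> ii A))"
    by (rule inter) simp_all
  have k4: "ii A \<otimes> pp = (ii A \<otimes> \<epsilon>) \<cdot> (ii A \<otimes> m)"
    unfolding pp_def by (subst inter) simp_all
  have k5: "dh \<otimes> ii A = (\<Delta> \<otimes> ii A) \<cdot> (\<eta> \<otimes> ii A)"
    unfolding dh_def by (subst inter) simp_all
  have k6: "(ii A \<otimes> pp) \<cdot> (dh \<otimes> ii A) = ii A"
  proof -
    have "(ii A \<otimes> pp) \<cdot> (dh \<otimes> ii A) = (ii A \<otimes> \<epsilon>) \<cdot> ((ii A \<otimes> m) \<cdot> (\<Delta> \<otimes> ii A)) \<cdot> (\<eta> \<otimes> ii A)"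
      by (simp add: k4 k5)
    also have "\<dots> = ((ii A \<otimes> \<epsilon>) \<cdot> \<Delta>) \<cdot> m \<cdot> (\<eta> \<otimes> ii A)" by (simp add: frob1)
    also have "\<dots> = ii A" by (simp add: counit1 munit2)
    finally show ?thesis .
  qed
  have "d A \<cdot> ((Phi \<cdot> Psi) \<otimes> ii A) = pp \<cdot> (Psi \<otimes> ii A)"
    using k0 by (simp add: chainL[OF L1])
  also have "\<dots> = pp \<cdot> (d A \<otimes> ii (A \<odot> A)) \<cdot> (ii D \<otimes> dh \<otimes> ii A)"
    using k0b unfolding Psi_def by simp
  also have "\<dots> = (d A \<otimes> pp) \<cdot> (ii D \<otimes> dh \<otimes> ii A)"
    using k1 by (simp add: chainL)
  also have "\<dots> = d A \<cdot> (ii (D \<odot> A) \<otimes> pp) \<cdot> (ii D \<otimes> dh \<otimes> ii A)"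
    by (simp add: chainL[OF k2', symmetric])
  also have "\<dots> = d A \<cdot> (ii D \<otimes> ii A)"
    using k3 by (simp add: k6)
  also have "\<dots> = d A" by simp
  finally show "d A \<cdot> ((Phi \<cdot> Psi) \<otimes> ii A) = d A" .
qed

definition Rho where "Rho = (d A \<otimes> ii D) \<cdot> ((ii D \<otimes> m) \<otimes> ii D) \<cdot> (ci \<otimes> b A)"
lemma Rho_ty[simp]: "wt Rho" "sdom Rho = A \<odot> D" "scod Rho = D" unfolding Rho_def by simp_all

definition qq where "qq = (m \<otimes> ii D) \<cdot> (ii A \<otimes> b A)"
lemma qq_ty[simp]: "wt qq" "sdom qq = A" "scod qq = A \<odot> D" unfolding qq_def by simp_all

lemma pp_assoc: "pp \<cdot> (ii A \<otimes> m) = pp \<cdot> (m \<otimes> ii A)"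
  unfolding pp_def by (simp add: massoc)

lemma m_ca: "m \<cdot> ca = m"
proof -
  have "m \<cdot> ca = (m \<cdot> cs A) \<cdot> ca" by (simp only: sc)
  also have "\<dots> = m \<cdot> (cs A \<cdot> ca)" by simp
  also have "\<dots> = m" by (simp add: ca2)
  finally show ?thesis .
qed

lemma n1: "ci \<cdot> (ii A \<otimes> Phi) = (Phi \<otimes> ii A) \<cdot> ca"
proof -
  have nat: "cs D \<cdot> (Phi \<otimes> ii A) = (ii A \<otimes> Phi) \<cdot> cs A"
    by (rule natur) (simp add: hom_iff)
  have "ci \<cdot> (ii A \<otimes> Phi) = ci \<cdot> (ii A \<otimes> Phi) \<cdot> (cs A \<cdot> ca)" by (simp add: ca2)
  also have "\<dots> = ci \<cdot> ((ii A \<otimes> Phi) \<cdot> cs A) \<cdot> ca" by simp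
  also have "\<dots> = ci \<cdot> (cs D \<cdot> (Phi \<otimes> ii A)) \<cdot> ca" by (simp only: nat)
  also have "\<dots> = (ci \<cdot> cs D) \<cdot> (Phi \<otimes> ii A) \<cdot> ca" by simp
  also have "\<dots> = (Phi \<otimes> ii A) \<cdot> ca" by (simp add: ci1)
  finally show ?thesis .
qed

lemma lin: "Phi \<cdot> m = Rho \<cdot> (ii A \<otimes> Phi)"
proof -
  have r1: "(ci \<otimes> b A) \<cdot> ((ii A \<otimes> Phi) \<otimes> ii I) = (ci \<cdot> (ii A \<otimes> Phi)) \<otimes> (b A \<cdot> ii I)"
    by (rule inter) simp_all
  have r1': "(ci \<otimes> b A) \<cdot> (ii A \<otimes> Phi) = ((Phi \<otimes> ii A) \<cdot> ca) \<otimes> b A" using r1 by (simp add: n1)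
  have r2: "((Phi \<otimes> ii A) \<otimes> b A) \<cdot> (ca \<otimes> ii I) = ((Phi \<otimes> ii A) \<cdot> ca) \<otimes> (b A \<cdot> ii I)"
    by (rule inter) simp_all
  have r2': "((Phi \<otimes> ii A) \<cdot> ca) \<otimes> b A = (Phi \<otimes> ii A \<otimes> b A) \<cdot> ca" using r2 by simp
  have r3: "(ii D \<otimes> (m \<otimes> ii D)) \<cdot> (Phi \<otimes> (ii A \<otimes> b A)) = (ii D \<cdot> Phi) \<otimes> ((m \<otimes> ii D) \<cdot> (ii A \<otimes> b A))"
    by (rule inter) simp_all
  have r3': "(ii D \<otimes> m \<otimes> ii D) \<cdot> (Phi \<otimes> ii A \<otimes> b A) = Phi \<otimes> qq" using r3 unfolding qq_def by simp
  have r4: "(Phi \<otimes> ii (A \<odot> D)) \<cdot> (ii A \<otimes> qq) = (Phi \<cdot> ii A) \<otimes> (ii (A \<odot> D) \<cdot> qq)"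
    by (rule inter) simp_all
  have r4': "(Phi \<otimes> ii (A \<odot> D)) \<cdot> (ii A \<otimes> qq) = Phi \<otimes> qq" using r4 by simp
  have r5: "(d A \<otimes> ii D) \<cdot> ((Phi \<otimes> ii A) \<otimes> ii D) = (d A \<cdot> (Phi \<otimes> ii A)) \<otimes> (ii D \<cdot> ii D)"
    by (rule inter) simp_all
  have r5': "(d A \<otimes> ii D) \<cdot> (Phi \<otimes> ii (A \<odot> D)) = pp \<otimes> ii D" using r5 by (simp add: L1)
  have s1: "ii A \<otimes> qq = (ii A \<otimes> (m \<otimes> ii D)) \<cdot> (ii A \<otimes> (ii A \<otimes> b A))"
    unfolding qq_def by (rule inter[symmetric, where f="ii A" and g = "ii A", simplified]) simp_all
  have s2: "(pp \<otimes> ii D) \<cdot> ((ii A \<otimes> m) \<otimes> ii D) = (pp \<cdot> (ii A \<otimes> m)) \<otimes> (ii D \<cdot> ii D)"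
    by (rule inter) simp_all
  have s2': "(pp \<otimes> ii D) \<cdot> (ii A \<otimes> m \<otimes> ii D) = (pp \<cdot> (m \<otimes> ii A)) \<otimes> ii D"
    using s2 by (simp add: pp_assoc)
  have s3: "(pp \<otimes> ii D) \<cdot> ((m \<otimes> ii A) \<otimes> ii D) = (pp \<cdot> (m \<otimes> ii A)) \<otimes> (ii D \<cdot> ii D)"
    by (rule inter) simp_all
  have s3': "(pp \<otimes> ii D) \<cdot> (m \<otimes> ii (A \<odot> D)) = (pp \<cdot> (m \<otimes> ii A)) \<otimes> ii D"
    using s3 by simp
  have s4: "(m \<otimes> ii (A \<odot> D)) \<cdot> (ii (A \<odot> A) \<otimes> b A) = (m \<cdot> ii (A \<odot> A)) \<otimes> (ii (A \<odot> D) \<cdot> b A)"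
    by (rule inter) simp_all
  have s4': "(m \<otimes> ii (A \<odot> D)) \<cdot> (ii (A \<odot> A) \<otimes> b A) = m \<otimes> b A" using s4 by simp
  have s5: "(ii A \<otimes> b A) \<cdot> (m \<otimes> ii I) = (ii A \<cdot> m) \<otimes> (b A \<cdot> ii I)"
    by (rule inter) simp_all
  have s5': "(ii A \<otimes> b A) \<cdot> m = m \<otimes> b A" using s5 by simp
  have "Rho \<cdot> (ii A \<otimes> Phi) = (d A \<otimes> ii D) \<cdot> (ii D \<otimes> m \<otimes> ii D) \<cdot> ((ci \<otimes> b A) \<cdot> (ii A \<otimes> Phi))"
    unfolding Rho_def by simp
  also have "\<dots> = (d A \<otimes> ii D) \<cdot> (ii D \<otimes> m \<otimes> ii D) \<cdot> (Phi \<otimes> ii A \<otimes> b A) \<cdot> ca"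
    by (simp only: r1' r2')
  also have "\<dots> = (d A \<otimes> ii D) \<cdot> (Phi \<otimes> qq) \<cdot> ca"
    by (simp add: chainL[OF r3'])
  also have "\<dots> = (d A \<otimes> ii D) \<cdot> (Phi \<otimes> ii (A \<odot> D)) \<cdot> (ii A \<otimes> qq) \<cdot> ca"
    using r4 by (simp add: chainL[OF r4'])
  also have "\<dots> = (pp \<otimes> ii D) \<cdot> (ii A \<otimes> qq) \<cdot> ca"
    by (simp add: chainL[OF r5'])
  also have "\<dots> = (pp \<otimes> ii D) \<cdot> (ii A \<otimes> m \<otimes> ii D) \<cdot> (ii (A \<odot> A) \<otimes> b A) \<cdot> ca"
    using s1 by simp
  also have "\<dots> = ((pp \<cdot> (m \<otimes> ii A)) \<otimes> ii D) \<cdot> (ii (A \<odot> A) \<otimes> b A) \<cdot> ca"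
    by (simp add: chainL[OF s2'])
  also have "\<dots> = (pp \<otimes> ii D) \<cdot> (m \<otimes> ii (A \<odot> D)) \<cdot> (ii (A \<odot> A) \<otimes> b A) \<cdot> ca"
    by (simp add: chainL[OF s3', symmetric])
  also have "\<dots> = (pp \<otimes> ii D) \<cdot> (m \<otimes> b A) \<cdot> ca"
    by (simp add: chainL[OF s4'])
  also have "\<dots> = (pp \<otimes> ii D) \<cdot> (ii A \<otimes> b A) \<cdot> m \<cdot> ca"
    by (simp add: chainL[OF s5'])
  also have "\<dots> = Phi \<cdot> m"
    unfolding Phi_def by (simp add: m_ca)
  finally show ?thesis by simp
qed

lemma Psi_lin: "Psi \<cdot> Rho = m \<cdot> (ii A \<otimes> Psi)"
proof -
  have t1: "(ii A \<otimes> Phi) \<cdot> (ii A \<otimes> Psi) = (ii A \<cdot> ii A) \<otimes> (Phi \<cdot> Psi)"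
    by (rule inter) simp_all
  have t1': "(ii A \<otimes> Phi) \<cdot> (ii A \<otimes> Psi) = ii (A \<odot> D)" using t1 by (simp add: PhiPsi)
  have l2: "Psi \<cdot> (Phi \<cdot> m) = m" by (simp add: chainL[OF PsiPhi])
  have "Psi \<cdot> Rho = Psi \<cdot> Rho \<cdot> ((ii A \<otimes> Phi) \<cdot> (ii A \<otimes> Psi))" by (simp only: t1') simp
  also have "\<dots> = Psi \<cdot> (Rho \<cdot> (ii A \<otimes> Phi)) \<cdot> (ii A \<otimes> Psi)" by simp
  also have "\<dots> = Psi \<cdot> (Phi \<cdot> m) \<cdot> (ii A \<otimes> Psi)" by (simp only: lin)
  also have "\<dots> = (Psi \<cdot> (Phi \<cdot> m)) \<cdot> (ii A \<otimes> Psi)" by simp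
  also have "\<dots> = m \<cdot> (ii A \<otimes> Psi)" by (simp only: l2)
  finally show ?thesis .
qed

lemma Phi_eq: "frob_Phi C A m \<epsilon> dl b = Phi"
proof -
  have "(\<epsilon> \<otimes> ii D) \<cdot> (m \<otimes> ii D) = (\<epsilon> \<cdot> m) \<otimes> (ii D \<cdot> ii D)" by (rule inter) simp_all
  then have "(\<epsilon> \<otimes> ii D) \<cdot> (m \<otimes> ii D) = pp \<otimes> ii D" unfolding pp_def by simp
  then show ?thesis unfolding frob_Phi_def Phi_def by (simp add: chainL)
qed

lemma Rho_eq: "dual_action C A cs dl b d A m = Rho"
  unfolding dual_action_def Rho_def by simp

lemma main: "frob_Phi C A m \<epsilon> dl b \<in> homA C A A m (dl A) (dual_action C A cs dl b d A m) \<and>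
         (\<exists>\<psi> \<in> homA C A (dl A) (dual_action C A cs dl b d A m) A m.
            cmp C \<psi> (frob_Phi C A m \<epsilon> dl b) = idm C A \<and>
            cmp C (frob_Phi C A m \<epsilon> dl b) \<psi> = idm C (dl A))"
  unfolding Phi_eq Rho_eq homA_def
  using lin Psi_lin PsiPhi PhiPsi by (simp add: hom_iff) (rule exI[of _ Psi], simp)

end

theorem mainTheorem16:
  fixes C :: "('o, 'm) tcat"
    and dl :: "'o \<Rightarrow> 'o" and b d :: "'o \<Rightarrow> 'm"
    and A :: 'o and m \<eta> \<Delta> \<epsilon> :: 'm and cs :: "'o \<Rightarrow> 'm"
  assumes "strict_abelian_tensor_cat C"
    and "right_duality C dl b d"
    and "is_frobenius C A m \<eta> \<Delta> \<epsilon>"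
    and "is_A_swap C A m \<eta> cs"
    and "cmp C m (cs A) = m"
  shows "frob_Phi C A m \<epsilon> dl b \<in> homA C A A m (dl A) (dual_action C A cs dl b d A m) \<and>
         (\<exists>\<psi> \<in> homA C A (dl A) (dual_action C A cs dl b d A m) A m.
            cmp C \<psi> (frob_Phi C A m \<epsilon> dl b) = idm C A \<and>
            cmp C (frob_Phi C A m \<epsilon> dl b) \<psi> = idm C (dl A))"
proof -
  interpret fr C dl b d A m \<eta> \<Delta> \<epsilon> cs using assms by (rule fr.intro)
  show ?thesis by (rule main)
qed

end
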